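(* In Ruleset A, Ruleset B and Ruleset D, the Quantum variation of Nim on at most $k$ heaps is equivalent to the corresponding game in which only superpositions of at most $k$ classical moves are allowed (i.e. each Q-move is a set of at most $k$ classical moves, with the same ruleset's conditions otherwise).
   Context: Nim: $\mathrm{Nim}(x_1,\ldots,x_k)$ is the position with heaps of $x_1,\ldots,x_k$ tokens; the classical move $(i,-j)$ with $j\ge1$ removes $j$ tokens from heap $i$ and is illegal if heap $i$ has fewer than $j$ tokens; normal play. Quantum variation: a position is a nonempty finite set $\langle G_1,\ldots,G_n\rangle$ of classical positions. A classical move $m$ is legal if legal in some $G_i$. A Q-move is a nonempty set $\{m_1,\ldots,m_k\}$ of legal classical moves, leading to the superposition of all legal results $\Gamma(G_i,m_j)$. Ruleset A: only Q-moves with at least two classical moves allowed. Ruleset B: same, except when the player has exactly one legal classical move overall he may play it alone. Ruleset D: all Q-moves allowed. The player with no allowed Q-move loses. $G\equiv H$ means $G+X$ and $H+X$ have the same outcome for every game $X$ (disjunctive sum). *)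

theory Defs
  imports Main
begin

inductive nposn and pposn for opts :: "'p \<Rightarrow> 'p set" where
  nposnI: "p' \<in> opts p \<Longrightarrow> pposn opts p' \<Longrightarrow> nposn opts p"
| pposnI: "(\<forall>p'\<in>opts p. nposn opts p') \<Longrightarrow> pposn opts p"

text \<open>Arbitrary (short) impartial games as finite game trees.\<close>
datatype gtree = GT "gtree list"

fun gt_opts :: "gtree \<Rightarrow> gtree set" where
  "gt_opts (GT xs) = set xs"

definition sum_opts :: "('a \<Rightarrow> 'a set) \<Rightarrow> ('b \<Rightarrow> 'b set) \<Rightarrow> 'a \<times> 'b \<Rightarrow> ('a \<times> 'b) set" where
  "sum_opts f g p = (\<lambda>a'. (a', snd p)) ` f (fst p) \<union> (\<lambda>b'. (fst p, b')) ` g (snd p)"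

definition game_equiv :: "('a \<Rightarrow> 'a set) \<Rightarrow> 'a \<Rightarrow> ('b \<Rightarrow> 'b set) \<Rightarrow> 'b \<Rightarrow> bool" where
  "game_equiv f a g b \<longleftrightarrow>
     (\<forall>X. (nposn (sum_opts f gt_opts) (a, X) \<longleftrightarrow> nposn (sum_opts g gt_opts) (b, X)) \<and>
          (pposn (sum_opts f gt_opts) (a, X) \<longleftrightarrow> pposn (sum_opts g gt_opts) (b, X)))"

text \<open>Classical Nim position: list of heap sizes. Classical move (i, j) means
  remove j tokens from heap i (0-indexed).\<close>
definition legal :: "nat \<times> nat \<Rightarrow> nat list \<Rightarrow> bool" where
  "legal m g \<longleftrightarrow> 1 \<le> snd m \<and> fst m < length g \<and> snd m \<le> g ! fst m"

definition apply_move :: "nat list \<Rightarrow> nat \<times> nat \<Rightarrow> nat list" where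
  "apply_move g m = g[fst m := g ! fst m - snd m]"

text \<open>Quantum position: a (nonempty, finite) set of classical positions.\<close>
definition legal_moves :: "nat list set \<Rightarrow> (nat \<times> nat) set" where
  "legal_moves Q = {m. \<exists>g\<in>Q. legal m g}"

definition qresult :: "nat list set \<Rightarrow> (nat \<times> nat) set \<Rightarrow> nat list set" where
  "qresult Q M = {apply_move g m | g m. g \<in> Q \<and> m \<in> M \<and> legal m g}"

datatype ruleset = RA | RB | RD

definition allowed :: "ruleset \<Rightarrow> nat list set \<Rightarrow> (nat \<times> nat) set \<Rightarrow> bool" where
  "allowed r Q M \<longleftrightarrow> finite M \<and> M \<noteq> {} \<and> M \<subseteq> legal_moves Q \<and>
     (case r of
        RA \<Rightarrow> 2 \<le> card M
      | RB \<Rightarrow> 2 \<le> card M \<or> (card M = 1 \<and> card (legal_moves Q) = 1)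
      | RD \<Rightarrow> True)"

definition qopts :: "ruleset \<Rightarrow> (nat \<Rightarrow> bool) \<Rightarrow> nat list set \<Rightarrow> nat list set set" where
  "qopts r sz Q = {qresult Q M | M. allowed r Q M \<and> sz (card M)}"

end

theory Submission imports Defs begin

lemma bisim_aux:
  assumes fw: "\<And>a b a'. S a b \<Longrightarrow> a' \<in> f a \<Longrightarrow> \<exists>b'\<in>g b. S a' b'"
    and bw: "\<And>a b b'. S a b \<Longrightarrow> b' \<in> g b \<Longrightarrow> \<exists>a'\<in>f a. S a' b'"
  shows "nposn (sum_opts f gt_opts) p \<Longrightarrow> (\<forall>b. S (fst p) b \<longrightarrow> nposn (sum_opts g gt_opts) (b, snd p))"
    and "pposn (sum_opts f gt_opts) p \<Longrightarrow> (\<forall>b. S (fst p) b \<longrightarrow> pposn (sum_opts g gt_opts) (b, snd p))"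
proof (induct rule: nposn_pposn.inducts)
  case (nposnI p' p)
  show ?case
  proof (intro allI impI)
    fix b assume Sb: "S (fst p) b"
    from nposnI(1) consider (L) a' where "a' \<in> f (fst p)" "p' = (a', snd p)"
      | (R) x' where "x' \<in> gt_opts (snd p)" "p' = (fst p, x')"
      unfolding sum_opts_def by auto
    then show "nposn (sum_opts g gt_opts) (b, snd p)"
    proof cases
      case L
      then obtain b' where "b' \<in> g b" "S a' b'" using fw Sb by blast
      then have "pposn (sum_opts g gt_opts) (b', snd p)" using nposnI(3) L by auto
      moreover have "(b', snd p) \<in> sum_opts g gt_opts (b, snd p)" using \<open>b' \<in> g b\<close>
        unfolding sum_opts_def by auto
      ultimately show ?thesis by (rule nposn_pposn.nposnI[rotated])
    next
      case R
      then have "pposn (sum_opts g gt_opts) (b, x')" using nposnI(3) Sb by auto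
      moreover have "(b, x') \<in> sum_opts g gt_opts (b, snd p)" using R
        unfolding sum_opts_def by auto
      ultimately show ?thesis by (rule nposn_pposn.nposnI[rotated])
    qed
  qed
next
  case (pposnI p)
  show ?case
  proof (intro allI impI)
    fix b assume Sb: "S (fst p) b"
    show "pposn (sum_opts g gt_opts) (b, snd p)"
    proof (rule nposn_pposn.pposnI, rule ballI)
      fix q assume "q \<in> sum_opts g gt_opts (b, snd p)"
      then consider (L) b' where "b' \<in> g b" "q = (b', snd p)"
      | (R) x' where "x' \<in> gt_opts (snd p)" "q = (b, x')"
        unfolding sum_opts_def by auto
      then show "nposn (sum_opts g gt_opts) q"
      proof cases
        case L
        then obtain a' where "a' \<in> f (fst p)" "S a' b'" using bw Sb by blast
        then have "(a', snd p) \<in> sum_opts f gt_opts p" unfolding sum_opts_def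
          by (cases p) auto
        then show ?thesis using pposnI \<open>S a' b'\<close> L by auto
      next
        case R
        then have "(fst p, x') \<in> sum_opts f gt_opts p" unfolding sum_opts_def
          by (cases p) auto
        then show ?thesis using pposnI Sb R by auto
      qed
    qed
  qed
qed

definition dle :: "nat list \<Rightarrow> nat list \<Rightarrow> bool" where
  "dle x y \<longleftrightarrow> length x = length y \<and> (\<forall>i<length x. x ! i \<le> y ! i)"

definition SR :: "nat \<Rightarrow> nat list set \<Rightarrow> nat list set \<Rightarrow> bool" where
  "SR k Q1 Q2 \<longleftrightarrow> Q2 \<subseteq> Q1 \<and> (\<forall>x\<in>Q1. \<exists>y\<in>Q2. dle x y) \<and> (\<forall>x\<in>Q1. length x \<le> k)"

lemma legal_dle: "legal m x \<Longrightarrow> dle x y \<Longrightarrow> legal m y"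
  unfolding legal_def dle_def by force

lemma SR_lm: "SR k Q1 Q2 \<Longrightarrow> legal_moves Q1 = legal_moves Q2"
  unfolding SR_def legal_moves_def using legal_dle by blast

lemma SR_qres:
  assumes S: "SR k Q1 Q2" and sub: "M' \<subseteq> M" and pos: "\<forall>m\<in>M'. 1 \<le> snd m"
    and cov: "\<forall>m\<in>M. \<exists>m'\<in>M'. fst m' = fst m \<and> snd m' \<le> snd m"
  shows "SR k (qresult Q1 M) (qresult Q2 M')"
  unfolding SR_def
proof (intro conjI ballI)
  show "qresult Q2 M' \<subseteq> qresult Q1 M"
    using S sub unfolding SR_def qresult_def by blast
next
  fix x assume "x \<in> qresult Q1 M"
  then obtain g m where x: "x = apply_move g m" and g: "g \<in> Q1" and m: "m \<in> M" and lg: "legal m g"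
    unfolding qresult_def by blast
  obtain y where y: "y \<in> Q2" and d: "dle g y" using S g unfolding SR_def by blast
  obtain m' where m': "m' \<in> M'" "fst m' = fst m" "snd m' \<le> snd m" using cov m by blast
  have lm': "legal m' y" using lg d m' pos unfolding legal_def dle_def by force
  have "dle (apply_move g m) (apply_move y m')"
    using lg d m' unfolding legal_def dle_def apply_move_def
    by (auto simp: nth_list_update)
  moreover have "apply_move y m' \<in> qresult Q2 M'" using y m' lm' unfolding qresult_def by blast
  ultimately show "\<exists>y\<in>qresult Q2 M'. dle x y" using x by blast
next
  fix x assume "x \<in> qresult Q1 M"
  then show "length x \<le> k" using S unfolding qresult_def SR_def apply_move_def by auto
qed

lemma reduce_moves:
  assumes al: "allowed r Q M" and len: "\<forall>g\<in>Q. length g \<le> k" and rk: "r = RD \<or> 2 \<le> k"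
  shows "\<exists>M'\<subseteq>M. allowed r Q M' \<and> card M' \<le> k \<and> (\<forall>m\<in>M. \<exists>m'\<in>M'. fst m' = fst m \<and> snd m' \<le> snd m)"
proof (cases "card M \<le> k")
  case True then show ?thesis using al by blast
next
  case False
  have fin: "finite M" and ne: "M \<noteq> {}" and sub: "M \<subseteq> legal_moves Q"
    using al unfolding allowed_def by auto
  define mn where "mn = {m\<in>M. \<forall>m'\<in>M. fst m' = fst m \<longrightarrow> snd m \<le> snd m'}"
  have mnM: "mn \<subseteq> M" unfolding mn_def by auto
  have cov: "\<forall>m\<in>M. \<exists>m'\<in>mn. fst m' = fst m \<and> snd m' \<le> snd m"
  proof
    fix m assume m: "m \<in> M"
    define j where "j = (LEAST j. \<exists>m'\<in>M. fst m' = fst m \<and> snd m' = j)"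
    have j: "\<exists>m'\<in>M. fst m' = fst m \<and> snd m' = j"
      unfolding j_def by (rule LeastI[where k="snd m"]) (use m in blast)
    have jmin: "\<And>j'. (\<exists>m'\<in>M. fst m' = fst m \<and> snd m' = j') \<Longrightarrow> j \<le> j'"
      unfolding j_def by (rule Least_le)
    obtain m' where "m' \<in> M" "fst m' = fst m" "snd m' = j" using j by blast
    moreover have "m' \<in> mn" unfolding mn_def using calculation jmin by auto
    moreover have "j \<le> snd m" using jmin m by blast
    ultimately show "\<exists>m'\<in>mn. fst m' = fst m \<and> snd m' \<le> snd m" by auto
  qed
  have finmn: "finite mn" using fin mnM finite_subset by blast
  have mnne: "mn \<noteq> {}" using cov ne by blast
  have inj: "inj_on fst mn"
    unfolding inj_on_def mn_def by (auto, metis fst_conv snd_conv antisym)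
  have "fst ` mn \<subseteq> {..<k}"
  proof
    fix i assume "i \<in> fst ` mn"
    then obtain m where "m \<in> M" "i = fst m" using mnM by auto
    then obtain g where "g \<in> Q" "legal m g" using sub unfolding legal_moves_def by auto
    then show "i \<in> {..<k}" using len \<open>i = fst m\<close> unfolding legal_def by force
  qed
  then have "card (fst ` mn) \<le> card {..<k}" by (intro card_mono) auto
  then have cmn: "card mn \<le> k" using card_image[OF inj] by simp
  show ?thesis
  proof (cases "2 \<le> card mn \<or> r = RD")
    case True
    have "allowed r Q mn" using True al mnM finmn mnne sub unfolding allowed_def
      by (cases r) auto
    then show ?thesis using mnM cmn cov by blast
  next
    case F: False
    then have k2: "2 \<le> k" using rk by auto
    have "card mn > 0" using finmn mnne by auto
    then have c1: "card mn = 1" using F by linarith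
    have "card mn < card M" using False cmn by auto
    have "\<not> M \<subseteq> mn"
    proof
      assume "M \<subseteq> mn"
      then have "card M \<le> card mn" by (rule card_mono[OF finmn])
      with \<open>card mn < card M\<close> show False by simp
    qed
    then obtain x where x: "x \<in> M" "x \<notin> mn" by blast
    define M' where "M' = insert x mn"
    have cM': "card M' = 2" unfolding M'_def using c1 x finmn by auto
    have "M' \<subseteq> legal_moves Q" using mnM x sub unfolding M'_def by auto
    moreover have "finite M'" "M' \<noteq> {}" using finmn unfolding M'_def by auto
    ultimately have "allowed r Q M'" using cM' unfolding allowed_def
      by (simp split: ruleset.split)
    moreover have "M' \<subseteq> M" using mnM x unfolding M'_def by auto
    moreover have "\<forall>m\<in>M. \<exists>m'\<in>M'. fst m' = fst m \<and> snd m' \<le> snd m" using cov unfolding M'_def by blast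
    ultimately show ?thesis using cM' k2 by auto
  qed
qed

lemma allowed_lm: "legal_moves Q1 = legal_moves Q2 \<Longrightarrow> allowed r Q1 M = allowed r Q2 M"
  unfolding allowed_def by (simp split: ruleset.split)

theorem corollary2:
  fixes r :: ruleset and k :: nat and Q :: "nat list set"
  assumes "finite Q" and "Q \<noteq> {}"
    and "\<forall>g\<in>Q. length g \<le> k"
    and "r = RD \<or> 2 \<le> k"
  shows "game_equiv (qopts r (\<lambda>_. True)) Q (qopts r (\<lambda>n. n \<le> k)) Q"
proof -
  have fw: "\<exists>b'\<in>qopts r (\<lambda>n. n \<le> k) b. SR k a' b'"
    if S: "SR k a b" and a': "a' \<in> qopts r (\<lambda>_. True) a" for a b a'
  proof -
    obtain M where M: "a' = qresult a M" "allowed r a M" using a' unfolding qopts_def by blast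
    have lm: "legal_moves a = legal_moves b" using SR_lm[OF S] .
    have alb: "allowed r b M" using M(2) allowed_lm[OF lm] by simp
    have lenb: "\<forall>g\<in>b. length g \<le> k" using S unfolding SR_def by blast
    obtain M' where M': "M' \<subseteq> M" "allowed r b M'" "card M' \<le> k"
      "\<forall>m\<in>M. \<exists>m'\<in>M'. fst m' = fst m \<and> snd m' \<le> snd m"
      using reduce_moves[OF alb lenb assms(4)] by blast
    have pos: "\<forall>m\<in>M'. 1 \<le> snd m" using M'(2) unfolding allowed_def legal_moves_def legal_def by auto
    have "SR k (qresult a M) (qresult b M')" by (rule SR_qres[OF S M'(1) pos M'(4)])
    moreover have "qresult b M' \<in> qopts r (\<lambda>n. n \<le> k) b" using M' unfolding qopts_def by blast
    ultimately show ?thesis using M(1) by blast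
  qed
  have bw: "\<exists>a'\<in>qopts r (\<lambda>_. True) a. SR k a' b'"
    if S: "SR k a b" and b': "b' \<in> qopts r (\<lambda>n. n \<le> k) b" for a b b'
  proof -
    obtain M where M: "b' = qresult b M" "allowed r b M" using b' unfolding qopts_def by blast
    have lm: "legal_moves a = legal_moves b" using SR_lm[OF S] .
    have ala: "allowed r a M" using M(2) allowed_lm[OF lm] by simp
    have pos: "\<forall>m\<in>M. 1 \<le> snd m" using M(2) unfolding allowed_def legal_moves_def legal_def by auto
    have "SR k (qresult a M) (qresult b M)" by (rule SR_qres[OF S _ pos]) auto
    moreover have "qresult a M \<in> qopts r (\<lambda>_. True) a" using ala unfolding qopts_def by blast
    ultimately show ?thesis using M(1) by blast
  qed
  have SQ: "SR k Q Q" using assms(3) unfolding SR_def dle_def by auto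
  note A = bisim_aux[where S="SR k", OF fw bw]
  note B = bisim_aux[where S="\<lambda>x y. SR k y x" and f="qopts r (\<lambda>n. n \<le> k)" and g="qopts r (\<lambda>_. True)", OF bw fw]
  show ?thesis unfolding game_equiv_def
  proof
    fix X
    show "(nposn (sum_opts (qopts r (\<lambda>_. True)) gt_opts) (Q, X) =
           nposn (sum_opts (qopts r (\<lambda>n. n \<le> k)) gt_opts) (Q, X)) \<and>
          (pposn (sum_opts (qopts r (\<lambda>_. True)) gt_opts) (Q, X) =
           pposn (sum_opts (qopts r (\<lambda>n. n \<le> k)) gt_opts) (Q, X))"
      using A[where p="(Q, X)"] B[where p="(Q, X)"] SQ by auto
  qed
qed

end
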